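(* Let $X$ be a real Hilbert space and $I$ either $[0,T]$ ($T>0$) or $[0,+\infty)$. Assume: $K\subset X$ is a nonempty closed convex cone; $A:X\to X$ satisfies $(Au-Av,u-v)_X\ge m_A\|u-v\|_X^2$ and $\|Au-Av\|_X\le L_A\|u-v\|_X$ for all $u,v\in X$, with $m_A,L_A>0$; $f\in C(I;X)$; $B:X\to X$ is Lipschitz continuous; $u_0\in X$; $\mathcal{S}:C(I;X)\to C(I;X)$ is a history-dependent operator; $j:X\times K\to\mathbb{R}$ is such that $j(\eta,\cdot)$ is convex, positively homogeneous and Lipschitz continuous on $K$ for every $\eta\in X$, and there is $\alpha_j\ge0$ with $j(\eta_1,v_2)-j(\eta_1,v_1)+j(\eta_2,v_1)-j(\eta_2,v_2)\le\alpha_j\|\eta_1-\eta_2\|_X\|v_1-v_2\|_X$ for all $\eta_i\in X$, $v_i\in K$. Then there exists a unique function $u\in C^1(I;X)$ such that $$-\dot u(t)\in \mathrm{N}_{C(u(t),t)}\big(A\dot u(t)+Bu(t)+\mathcal{S}u(t)\big)\quad\forall\,t\in I,\qquad u(0)=u_0.$$ Moreover, $\dot u\in C(I;K)$.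
   Context: $\mathcal{S}$ is history-dependent if for every compact $\mathcal J\subset I$ there is $L_{\mathcal J}>0$ with $\|\mathcal{S}u_1(t)-\mathcal{S}u_2(t)\|_X\le L_{\mathcal J}\int_0^t\|u_1(s)-u_2(s)\|_X ds$ for all $u_1,u_2\in C(I;X)$, $t\in\mathcal J$. Define $J(\eta,v)=j(\eta,v)$ for $v\in K$, $J(\eta,v)=+\infty$ for $v\notin K$; $C(\eta)=\{\xi\in X: J(\eta,v)\ge(\xi,v)_X\ \forall v\in X\}$; $C(\eta,t)=f(t)-C(\eta)$. For a nonempty closed convex $D\subset X$, $\mathrm{N}_D(x)=\{\xi:(\xi,w-x)_X\le0\ \forall w\in D\}$ if $x\in D$, $\emptyset$ otherwise. *)

theory Defs
  imports "HOL-Analysis.Analysis"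
begin

definition tdot :: "real set \<Rightarrow> (real \<Rightarrow> 'a::real_normed_vector) \<Rightarrow> real \<Rightarrow> 'a" where
  "tdot I u t = vector_derivative u (at t within I)"

definition C1_on :: "real set \<Rightarrow> (real \<Rightarrow> 'a::real_normed_vector) \<Rightarrow> bool" where
  "C1_on I u \<longleftrightarrow> (\<forall>t\<in>I. u differentiable (at t within I)) \<and> continuous_on I (tdot I u)"

definition history_dependent ::
  "real set \<Rightarrow> ((real \<Rightarrow> 'a::real_normed_vector) \<Rightarrow> (real \<Rightarrow> 'a)) \<Rightarrow> bool" where
  "history_dependent I S \<longleftrightarrow>
     (\<forall>J. compact J \<and> J \<subseteq> I \<longrightarrow>
        (\<exists>L>0. \<forall>u1 u2. continuous_on I u1 \<and> continuous_on I u2 \<longrightarrow>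
            (\<forall>t\<in>J. norm (S u1 t - S u2 t) \<le> L * integral {0..t} (\<lambda>s. norm (u1 s - u2 s)))))"

definition Jfun :: "('a \<Rightarrow> 'a \<Rightarrow> real) \<Rightarrow> 'a set \<Rightarrow> 'a \<Rightarrow> 'a \<Rightarrow> ereal" where
  "Jfun j K \<eta> v = (if v \<in> K then ereal (j \<eta> v) else \<infinity>)"

definition Cset :: "('a::real_inner \<Rightarrow> 'a \<Rightarrow> real) \<Rightarrow> 'a set \<Rightarrow> 'a \<Rightarrow> 'a set" where
  "Cset j K \<eta> = {\<xi>. \<forall>v. Jfun j K \<eta> v \<ge> ereal (\<xi> \<bullet> v)}"

definition Ct :: "(real \<Rightarrow> 'a::real_inner) \<Rightarrow> ('a \<Rightarrow> 'a \<Rightarrow> real) \<Rightarrow> 'a set \<Rightarrow> 'a \<Rightarrow> real \<Rightarrow> 'a set" where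
  "Ct f j K \<eta> t = (\<lambda>\<xi>. f t - \<xi>) ` Cset j K \<eta>"

definition normal_cone :: "'a::real_inner set \<Rightarrow> 'a \<Rightarrow> 'a set" where
  "normal_cone D x = (if x \<in> D then {\<xi>. \<forall>w\<in>D. \<xi> \<bullet> (w - x) \<le> 0} else {})"

end

theory Submission
  imports Defs
begin


instance bcontfun :: (metric_space, "{real_normed_vector,complete_space}") banach ..

definition emb :: "'a::{real_normed_vector,complete_space} \<Rightarrow> (real \<Rightarrow>\<^sub>C 'a)" where
  "emb x = const_bcontfun x"
definition ev :: "(real \<Rightarrow>\<^sub>C 'a::{real_normed_vector,complete_space}) \<Rightarrow> 'a" where
  "ev F = apply_bcontfun F 0"

lemma ev_emb[simp]: "ev (emb x) = x"
  by (simp add: ev_def emb_def const_bcontfun.rep_eq)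

lemma emb_add: "emb (x + y) = emb x + emb y"
  by (rule bcontfun_eqI) (simp add: emb_def const_bcontfun.rep_eq)
lemma emb_diff: "emb (x - y) = emb x - emb y"
  by (rule bcontfun_eqI) (simp add: emb_def const_bcontfun.rep_eq)
lemma emb_scale: "emb (c *\<^sub>R x) = c *\<^sub>R emb x"
  by (rule bcontfun_eqI) (simp add: emb_def const_bcontfun.rep_eq)
lemma ev_add: "ev (x + y) = ev x + ev y"
  by (simp add: ev_def)
lemma ev_diff: "ev (x - y) = ev x - ev y"
  by (simp add: ev_def)
lemma ev_scale: "ev (c *\<^sub>R x) = c *\<^sub>R ev x"
  by (simp add: ev_def)
lemma norm_ev: "norm (ev F) \<le> norm F"
  by (simp add: ev_def norm_bounded)
lemma norm_emb[simp]: "norm (emb x) = norm x"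
proof -
  have "norm (emb x) \<le> norm x"
    unfolding emb_def norm_bcontfun_def dist_bcontfun_def
    by (simp add: const_bcontfun.rep_eq)
  moreover have "norm x \<le> norm (emb x)" using norm_ev[of "emb x"] by simp
  ultimately show ?thesis by simp
qed

lemma bl_ev: "bounded_linear (ev :: (real \<Rightarrow>\<^sub>C 'a::{real_normed_vector,complete_space}) \<Rightarrow> 'a)"
  by (rule bounded_linear_intro[where K=1]) (auto simp: ev_add ev_scale norm_ev)
lemma bl_emb: "bounded_linear (emb :: 'a::{real_normed_vector,complete_space} \<Rightarrow> _)"
  by (rule bounded_linear_intro[where K=1]) (auto simp: emb_add emb_scale)

lemma bl_vd:
  assumes "bounded_linear h" "(f has_vector_derivative f') F"
  shows "((\<lambda>x. h (f x)) has_vector_derivative h f') F"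
proof -
  have "((\<lambda>x. h (f x)) has_derivative (\<lambda>x. h (x *\<^sub>R f'))) F"
    using bounded_linear.has_derivative[OF assms(1)] assms(2) unfolding has_vector_derivative_def by blast
  moreover have "(\<lambda>x. h (x *\<^sub>R f')) = (\<lambda>x. x *\<^sub>R h f')"
    using assms(1) by (simp add: linear_simps(5) bounded_linear.linear)
  ultimately show ?thesis unfolding has_vector_derivative_def by simp
qed

definition Pint :: "real \<Rightarrow> real \<Rightarrow> (real \<Rightarrow> 'a::{real_normed_vector,complete_space}) \<Rightarrow> 'a" where
  "Pint a t g = ev (integral {a..t} (\<lambda>s. emb (g s)))"

lemma cont_emb: "continuous_on S g \<Longrightarrow> continuous_on S (\<lambda>s. emb (g s))"
  using bounded_linear.continuous_on[OF bl_emb] by blast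

lemma Pint_deriv:
  assumes "continuous_on {a..b} g" "x \<in> {a..b}"
  shows "((\<lambda>t. Pint a t g) has_vector_derivative g x) (at x within {a..b})"
proof -
  have "((\<lambda>u. integral {a..u} (\<lambda>s. emb (g s))) has_vector_derivative emb (g x)) (at x within {a..b})"
    by (rule integral_has_vector_derivative[OF cont_emb[OF assms(1)] assms(2)])
  from bl_vd[OF bl_ev this] show ?thesis unfolding Pint_def by simp
qed

lemma Pint_refl[simp]: "Pint a a g = 0"
  by (simp add: Pint_def ev_def)

lemma Pint_norm:
  assumes "continuous_on {a..t} g1" "continuous_on {a..t} g2"
  shows "norm (Pint a t g1 - Pint a t g2) \<le> integral {a..t} (\<lambda>s. norm (g1 s - g2 s))"
proof -
  have i1: "(\<lambda>s. emb (g1 s)) integrable_on {a..t}" by (rule integrable_continuous_real[OF cont_emb[OF assms(1)]])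
  have i2: "(\<lambda>s. emb (g2 s)) integrable_on {a..t}" by (rule integrable_continuous_real[OF cont_emb[OF assms(2)]])
  have "Pint a t g1 - Pint a t g2 = ev (integral {a..t} (\<lambda>s. emb (g1 s) - emb (g2 s)))"
    unfolding Pint_def by (simp add: integral_diff[OF i1 i2] ev_diff)
  also have "norm \<dots> \<le> norm (integral {a..t} (\<lambda>s. emb (g1 s) - emb (g2 s)))" by (rule norm_ev)
  also have "\<dots> \<le> integral {a..t} (\<lambda>s. norm (g1 s - g2 s))"
  proof (rule integral_norm_bound_integral)
    show "(\<lambda>s. emb (g1 s) - emb (g2 s)) integrable_on {a..t}" using i1 i2 by (rule integrable_diff)
    show "(\<lambda>s. norm (g1 s - g2 s)) integrable_on {a..t}"
      by (intro integrable_continuous_real continuous_intros assms)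
  qed (simp add: emb_diff[symmetric])
  finally show ?thesis .
qed

lemma Pint_FTC:
  assumes "a \<le> b" "\<And>x. x \<in> {a..b} \<Longrightarrow> (w has_vector_derivative w' x) (at x within {a..b})"
  shows "w b - w a = Pint a b w'"
proof -
  have "((\<lambda>x. emb (w' x)) has_integral (emb (w b) - emb (w a))) {a..b}"
    by (rule fundamental_theorem_of_calculus[OF assms(1)]) (rule bl_vd[OF bl_emb assms(2)])
  then have "integral {a..b} (\<lambda>x. emb (w' x)) = emb (w b - w a)" by (simp add: integral_unique emb_diff)
  then show ?thesis unfolding Pint_def by simp
qed




lemma norm_mid_identity:
  fixes a b g :: "'a::real_inner"
  shows "(norm ((1/2) *\<^sub>R (a + b) - g))^2 = ((norm (a - g))^2 + (norm (b - g))^2)/2 - (norm (a - b))^2/4"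
proof -
  have h: "(1/2) *\<^sub>R (g + g) = g" by (simp flip: scaleR_2)
  have e: "(1/2) *\<^sub>R (a + b) - g = (1/2) *\<^sub>R ((a - g) + (b - g))"
    by (subst h[symmetric]) (simp only: scaleR_add_right scaleR_diff_right algebra_simps)
  have e2: "a - b = (a - g) - (b - g)" by simp
  show ?thesis unfolding e apply (subst e2)
    apply (simp only: power2_norm_eq_inner)
    by (simp add: inner_add_left inner_add_right inner_diff_left inner_diff_right inner_commute field_simps)
qed

lemma norm_seg_identity:
  fixes w v g :: "'a::real_inner"
  shows "(norm ((1 - s) *\<^sub>R w + s *\<^sub>R v - g))^2 = (norm (w - g))^2 + 2 * s * ((w - g) \<bullet> (v - w)) + s^2 * (norm (v - w))^2"
proof -
  have e: "(1 - s) *\<^sub>R w + s *\<^sub>R v - g = (w - g) + s *\<^sub>R (v - w)" by (simp add: algebra_simps)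
  show ?thesis unfolding e
    apply (simp only: power2_norm_eq_inner)
    by (simp add: inner_add_left inner_add_right inner_commute power2_eq_square algebra_simps)
qed
lemma avg_lt:
  fixes a b m i1 i2 i :: real
  assumes "a < m + i1" "b < m + i2" "i1 \<le> i" "i2 \<le> i"
  shows "(a + b)/2 - m < i"
  using assms by (simp add: field_simps)

lemma prox_exists:
  fixes K :: "'a::{real_inner,complete_space} set" and \<phi> :: "'a \<Rightarrow> real"
  assumes K: "closed K" "convex K" "K \<noteq> {}" and cvx: "convex_on K \<phi>" and lip: "L-lipschitz_on K \<phi>"
  shows "\<exists>w\<in>K. \<forall>v\<in>K. (w - g) \<bullet> (v - w) + \<phi> v - \<phi> w \<ge> 0"
proof -
  define F where "F w = (norm (w - g))^2/2 + \<phi> w" for w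
  obtain k0 where k0: "k0 \<in> K" using K by blast
  have L0: "L \<ge> 0" using lip by (simp add: lipschitz_on_def)
  have lb: "F w \<ge> \<phi> k0 - L * norm (g - k0) - L^2/2" if "w \<in> K" for w
  proof -
    have "dist (\<phi> w) (\<phi> k0) \<le> L * dist w k0" using lip that k0 by (simp add: lipschitz_on_def)
    then have h1: "\<phi> w \<ge> \<phi> k0 - L * norm (w - k0)" by (simp add: dist_norm abs_le_iff)
    have tri: "norm (w - k0) \<le> norm (w - g) + norm (g - k0)"
      using norm_triangle_ineq[of "w - g" "g - k0"] by simp
    have h2: "(norm (w - g))^2/2 - L * norm (w - g) \<ge> -(L^2/2)"
      using zero_le_power2[of "norm (w - g) - L"] by (simp add: power2_eq_square algebra_simps)
    have h3: "L * norm (w - k0) \<le> L * norm (w - g) + L * norm (g - k0)"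
      using mult_left_mono[OF tri L0] by (simp add: distrib_left)
    show ?thesis unfolding F_def using h1 h2 h3 by linarith
  qed
  define m where "m = Inf (F ` K)"
  have bdd: "bdd_below (F ` K)" using lb by (auto intro!: bdd_belowI2)
  have Fge: "m \<le> F w" if "w \<in> K" for w unfolding m_def using bdd that by (simp add: cInf_lower)
  have "\<forall>n. \<exists>w\<in>K. F w < m + inverse (real (Suc n))"
  proof
    fix n
    have "Inf (F ` K) < m + inverse (real (Suc n))" unfolding m_def by simp
    then show "\<exists>w\<in>K. F w < m + inverse (real (Suc n))" using cInf_less_iff[of "F ` K"] bdd K(3) by auto
  qed
  then obtain x where xK: "\<And>n. x n \<in> K" and xF: "\<And>n. F (x n) < m + inverse (real (Suc n))"
    by metis
  have mid: "(norm (a - b))^2 \<le> 8 * ((F a + F b)/2 - m)" if "a \<in> K" "b \<in> K" for a b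
  proof -
    have "(1 - 1/2) *\<^sub>R a + (1/2) *\<^sub>R b \<in> K" using K(2) that by (simp add: convexD)
    moreover have "(1 - 1/2) *\<^sub>R a + (1/2) *\<^sub>R b = (1/2) *\<^sub>R (a + b)" by (simp add: algebra_simps)
    ultimately have mK: "(1/2) *\<^sub>R (a + b) \<in> K" by simp
    have "\<phi> ((1 - 1/2) *\<^sub>R a + (1/2) *\<^sub>R b) \<le> (1 - 1/2) * \<phi> a + (1/2) * \<phi> b"
      using convex_onD[OF cvx, of "1/2" a b] that by simp
    then have phm: "\<phi> ((1/2) *\<^sub>R (a + b)) \<le> (\<phi> a + \<phi> b)/2"
      by (simp add: algebra_simps)
    have "m \<le> F ((1/2) *\<^sub>R (a + b))" using Fge mK .
    then show ?thesis using phm norm_mid_identity[of a b g] unfolding F_def by (simp add: field_simps)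
  qed
  have "Cauchy x"
  proof (rule metric_CauchyI)
    fix e :: real assume e: "e > 0"
    obtain N :: nat where N: "8 / e^2 < real N" using reals_Archimedean2 by blast
    have "\<forall>p\<ge>N. \<forall>q\<ge>N. dist (x p) (x q) < e"
    proof (intro allI impI)
      fix p q assume p: "p \<ge> N" and q: "q \<ge> N"
      have ip: "inverse (real (Suc p)) \<le> inverse (real (Suc N))" using p by (simp add: field_simps)
      have iq: "inverse (real (Suc q)) \<le> inverse (real (Suc N))" using q by (simp add: field_simps)
      have "(norm (x p - x q))^2 \<le> 8 * ((F (x p) + F (x q))/2 - m)" using mid xK by blast
      also have "\<dots> < 8 * inverse (real (Suc N))"
      proof -
        have "(F (x p) + F (x q))/2 - m < inverse (real (Suc N))" by (rule avg_lt[OF xF[of p] xF[of q] ip iq])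
        then show ?thesis by (rule mult_strict_left_mono) simp
      qed
      also have "\<dots> < e^2"
      proof -
        have "8 / e^2 < real (Suc N)" using N by simp
        then have "8 < e^2 * real (Suc N)" using e by (simp add: field_simps)
        then show ?thesis using e by (simp add: field_simps)
      qed
      finally have "(norm (x p - x q))^2 < e^2" .
      then have "norm (x p - x q) < e" using e by (smt (verit) power_mono norm_ge_zero)
      then show "dist (x p) (x q) < e" by (simp add: dist_norm)
    qed
    then show "\<exists>M. \<forall>p\<ge>M. \<forall>q\<ge>M. dist (x p) (x q) < e" by blast
  qed
  then obtain w where xw: "x \<longlonglongrightarrow> w" using Cauchy_convergent_iff convergent_def by blast
  have wK: "w \<in> K" using closed_sequentially[OF K(1) xK xw] .
  have contF: "continuous_on K F" unfolding F_def
    using lipschitz_on_continuous_on[OF lip] by (intro continuous_intros) auto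
  have "(\<lambda>n. F (x n)) \<longlonglongrightarrow> F w"
    by (rule continuous_on_tendsto_compose[OF contF xw wK]) (simp add: xK)
  moreover have "(\<lambda>n. m + inverse (real (Suc n))) \<longlonglongrightarrow> m"
    using tendsto_add[OF tendsto_const LIMSEQ_inverse_real_of_nat, of m] by simp
  ultimately have "F w \<le> m" using xF by (intro LIMSEQ_le) (auto intro: less_imp_le)
  then have opt: "F w \<le> F v" if "v \<in> K" for v using Fge that by force
  show ?thesis
  proof (intro bexI[OF _ wK] ballI)
    fix v assume vK: "v \<in> K"
    define Q where "Q = (w - g) \<bullet> (v - w) + \<phi> v - \<phi> w"
    define D where "D = (norm (v - w))^2"
    have D0: "D \<ge> 0" unfolding D_def by simp
    have step: "0 \<le> Q + s/2 * D" if s: "0 < s" "s \<le> 1" for s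
    proof -
      have xs: "(1 - s) *\<^sub>R w + s *\<^sub>R v \<in> K" using K(2) wK vK s by (simp add: convexD)
      have ph: "\<phi> ((1 - s) *\<^sub>R w + s *\<^sub>R v) \<le> (1 - s) * \<phi> w + s * \<phi> v"
        using convex_onD[OF cvx, of s w v] s wK vK by simp
      have Fle: "F w \<le> F ((1 - s) *\<^sub>R w + s *\<^sub>R v)" using opt xs .
      have ph2: "\<phi> ((1 - s) *\<^sub>R w + s *\<^sub>R v) \<le> \<phi> w - s * \<phi> w + s * \<phi> v"
        using ph by (simp add: left_diff_distrib)
      have idt: "(norm ((1 - s) *\<^sub>R w + s *\<^sub>R v - g))^2 = (norm (w - g))^2 + 2 * (s * ((w - g) \<bullet> (v - w))) + s^2 * D"
        using norm_seg_identity[of s w v g] unfolding D_def by (simp add: mult.assoc)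
      have "0 \<le> s * ((w - g) \<bullet> (v - w)) + s * \<phi> v - s * \<phi> w + s^2 * D / 2"
        using Fle ph2 idt unfolding F_def by linarith
      then have "0 \<le> s * (Q + s/2 * D)" unfolding Q_def by (simp add: algebra_simps power2_eq_square)
      then show ?thesis using s by (simp add: zero_le_mult_iff)
    qed
    show "(w - g) \<bullet> (v - w) + \<phi> v - \<phi> w \<ge> 0"
    proof (rule ccontr)
      assume "\<not> ?thesis"
      then have Qn: "Q < 0" unfolding Q_def by simp
      define s where "s = min 1 (- Q / (D + 1))"
      have s0: "0 < s" using Qn D0 unfolding s_def by (simp add: field_simps)
      have s1: "s \<le> 1" unfolding s_def by simp
      have "s * D \<le> (- Q / (D + 1)) * D" using D0 unfolding s_def by (intro mult_right_mono) auto
      also have "\<dots> \<le> - Q" using D0 Qn by (simp add: field_simps)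
      finally have "s * D \<le> - Q" .
      then have "Q + s/2 * D < 0" using Qn by simp
      with step[OF s0 s1] show False by simp
    qed
  qed
qed




lemma norm_diff_sq:
  fixes x y :: "'a::real_inner"
  shows "(norm (x - y))^2 = (norm x)^2 - 2 * (x \<bullet> y) + (norm y)^2"
  apply (simp only: power2_norm_eq_inner)
  by (simp add: inner_diff_left inner_diff_right inner_commute)

lemma vi_exists:
  fixes K :: "'a::{real_inner,complete_space} set" and \<phi> :: "'a \<Rightarrow> real" and A :: "'a \<Rightarrow> 'a"
  assumes K: "closed K" "convex K" "K \<noteq> {}" and cvx: "convex_on K \<phi>" and lip: "L-lipschitz_on K \<phi>"
    and mA: "mA > 0" and LA: "LA > 0"
    and mono: "\<And>u v. (A u - A v) \<bullet> (u - v) \<ge> mA * (norm (u - v))\<^sup>2"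
    and Alip: "\<And>u v. norm (A u - A v) \<le> LA * norm (u - v)"
  shows "\<exists>w\<in>K. \<forall>v\<in>K. (A w - h) \<bullet> (v - w) + \<phi> v - \<phi> w \<ge> 0"
proof -
  define \<rho> where "\<rho> = mA / LA^2"
  have \<rho>0: "\<rho> > 0" unfolding \<rho>_def using mA LA by simp
  define Psol where "Psol g w \<longleftrightarrow> w \<in> K \<and> (\<forall>v\<in>K. (w - g) \<bullet> (v - w) + \<rho> * \<phi> v - \<rho> * \<phi> w \<ge> 0)" for g w
  have cvx2: "convex_on K (\<lambda>x. \<rho> * \<phi> x)" using convex_on_cmul[OF less_imp_le[OF \<rho>0] cvx] by simp
  have lip2: "(\<rho> * L)-lipschitz_on K (\<lambda>x. \<rho> * \<phi> x)"
    using lip \<rho>0 unfolding lipschitz_on_def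
    by (auto simp: dist_real_def abs_mult right_diff_distrib[symmetric] mult.assoc intro!: mult_left_mono)
  have ex: "\<exists>w. Psol g w" for g
    using prox_exists[OF K cvx2 lip2, of g] unfolding Psol_def by auto
  define P where "P g = (SOME w. Psol g w)" for g
  have P: "Psol g (P g)" for g unfolding P_def using ex by (rule someI_ex)
  have nonexp: "norm (w1 - w2) \<le> norm (g1 - g2)" if "Psol g1 w1" "Psol g2 w2" for g1 g2 w1 w2
  proof -
    have a: "(w1 - g1) \<bullet> (w2 - w1) + \<rho> * \<phi> w2 - \<rho> * \<phi> w1 \<ge> 0"
      using that unfolding Psol_def by auto
    have b: "(w2 - g2) \<bullet> (w1 - w2) + \<rho> * \<phi> w1 - \<rho> * \<phi> w2 \<ge> 0"
      using that unfolding Psol_def by auto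
    have e: "(w1 - g1) \<bullet> (w2 - w1) + (w2 - g2) \<bullet> (w1 - w2) = (g1 - g2) \<bullet> (w1 - w2) - (w1 - w2) \<bullet> (w1 - w2)"
      by (simp add: inner_diff_left inner_diff_right inner_commute algebra_simps)
    have "(norm (w1 - w2))^2 \<le> (g1 - g2) \<bullet> (w1 - w2)"
      using a b e by (simp add: power2_norm_eq_inner)
    also have "\<dots> \<le> norm (g1 - g2) * norm (w1 - w2)" by (rule Cauchy_Schwarz_ineq2[THEN order_trans[OF abs_ge_self]])
    finally have "norm (w1 - w2) * norm (w1 - w2) \<le> norm (g1 - g2) * norm (w1 - w2)"
      by (simp add: power2_eq_square)
    then show ?thesis
      by (cases "norm (w1 - w2) = 0") (auto simp: mult_le_cancel_right)
  qed
  define T where "T x = P (x - \<rho> *\<^sub>R (A x - h))" for x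
  define c where "c = sqrt (max 0 (1 - mA^2 / LA^2))"
  have c0: "0 \<le> c" unfolding c_def by simp
  have c1: "c < 1"
  proof -
    have "mA^2 / LA^2 > 0" using mA LA by simp
    then have "max 0 (1 - mA^2 / LA^2) < 1" by simp
    then show ?thesis unfolding c_def using real_sqrt_less_mono[of "max 0 (1 - mA^2 / LA^2)" 1] by simp
  qed
  have contr: "dist (T x) (T y) \<le> c * dist x y" for x y
  proof -
    define d where "d = x - y"
    define e where "e = A x - A y"
    have "norm (T x - T y) \<le> norm ((x - \<rho> *\<^sub>R (A x - h)) - (y - \<rho> *\<^sub>R (A y - h)))"
      unfolding T_def by (rule nonexp[OF P P])
    also have "(x - \<rho> *\<^sub>R (A x - h)) - (y - \<rho> *\<^sub>R (A y - h)) = d - \<rho> *\<^sub>R e"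
      unfolding d_def e_def by (simp add: algebra_simps)
    finally have n1: "norm (T x - T y) \<le> norm (d - \<rho> *\<^sub>R e)" .
    have ed: "e \<bullet> d \<ge> mA * (norm d)^2" unfolding e_def d_def by (rule mono)
    have ne: "norm e \<le> LA * norm d" unfolding e_def d_def by (rule Alip)
    have ne2: "(norm e)^2 \<le> LA^2 * (norm d)^2"
      using power_mono[OF ne norm_ge_zero, of 2] by (simp add: power_mult_distrib)
    have "(norm (d - \<rho> *\<^sub>R e))^2 = (norm d)^2 - 2 * \<rho> * (e \<bullet> d) + \<rho>^2 * (norm e)^2"
      using \<rho>0 by (simp add: norm_diff_sq[of d "\<rho> *\<^sub>R e"] power_mult_distrib inner_commute)
    also have "\<dots> \<le> (norm d)^2 - 2 * \<rho> * (mA * (norm d)^2) + \<rho>^2 * (LA^2 * (norm d)^2)"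
    proof -
      have "2 * \<rho> * (mA * (norm d)^2) \<le> 2 * \<rho> * (e \<bullet> d)" using ed \<rho>0 by simp
      moreover have "\<rho>^2 * (norm e)^2 \<le> \<rho>^2 * (LA^2 * (norm d)^2)" using ne2 by (simp add: mult_left_mono)
      ultimately show ?thesis by linarith
    qed
    also have "\<dots> = (1 - mA^2 / LA^2) * (norm d)^2"
      unfolding \<rho>_def using LA by (simp add: field_simps power2_eq_square)
    also have "\<dots> \<le> c^2 * (norm d)^2"
    proof (rule mult_right_mono)
      have "c^2 = max 0 (1 - mA^2 / LA^2)" unfolding c_def by (rule real_sqrt_pow2) simp
      then show "1 - mA^2 / LA^2 \<le> c^2" by linarith
    qed simp
    also have "\<dots> = (c * norm d)^2" by (rule power_mult_distrib[symmetric])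
    finally have "(norm (d - \<rho> *\<^sub>R e))^2 \<le> (c * norm d)^2" .
    then have "norm (d - \<rho> *\<^sub>R e) \<le> c * norm d"
      by (rule power2_le_imp_le) (rule mult_nonneg_nonneg[OF c0 norm_ge_zero])
    with n1 have "norm (T x - T y) \<le> c * norm (x - y)" unfolding d_def by linarith
    then show ?thesis by (simp only: dist_norm)
  qed
  obtain x where x: "T x = x" using banach_fix_type[OF c0 c1, of T] contr by blast
  have "Psol (x - \<rho> *\<^sub>R (A x - h)) x" using P[of "x - \<rho> *\<^sub>R (A x - h)"] x unfolding T_def by simp
  then have xK: "x \<in> K" and xv: "\<And>v. v \<in> K \<Longrightarrow> (\<rho> *\<^sub>R (A x - h)) \<bullet> (v - x) + \<rho> * \<phi> v - \<rho> * \<phi> x \<ge> 0"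
    unfolding Psol_def by auto
  show ?thesis
  proof (intro bexI[OF _ xK] ballI)
    fix v assume "v \<in> K"
    from xv[OF this] have "\<rho> * ((A x - h) \<bullet> (v - x) + \<phi> v - \<phi> x) \<ge> 0"
      by (simp add: algebra_simps)
    then show "(A x - h) \<bullet> (v - x) + \<phi> v - \<phi> x \<ge> 0" using \<rho>0 by (simp add: zero_le_mult_iff)
  qed
qed




locale prob =
  fixes I :: "real set" and T :: real
    and K :: "'a::{real_inner,complete_space} set"
    and A B :: "'a \<Rightarrow> 'a" and mA LA LB :: real
    and f :: "real \<Rightarrow> 'a" and u0 :: 'a
    and S :: "(real \<Rightarrow> 'a) \<Rightarrow> (real \<Rightarrow> 'a)"
    and j :: "'a \<Rightarrow> 'a \<Rightarrow> real" and \<alpha> :: real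
  assumes I: "(T > 0 \<and> I = {0..T}) \<or> I = {0..}"
    and K_ne: "K \<noteq> {}" and K_closed: "closed K" and K_convex: "convex K"
    and K_cone: "cone K"
    and mA: "mA > 0" and LA: "LA > 0"
    and A_mono: "\<And>u v. (A u - A v) \<bullet> (u - v) \<ge> mA * (norm (u - v))\<^sup>2"
    and A_lip: "\<And>u v. norm (A u - A v) \<le> LA * norm (u - v)"
    and f_cont: "continuous_on I f"
    and B_lip: "LB-lipschitz_on UNIV B"
    and S_maps: "\<And>u. continuous_on I u \<Longrightarrow> continuous_on I (S u)"
    and S_hist: "history_dependent I S"
    and j_convex: "\<And>\<eta>. convex_on K (j \<eta>)"
    and j_homog: "\<And>\<eta> c v. c > 0 \<Longrightarrow> v \<in> K \<Longrightarrow> j \<eta> (c *\<^sub>R v) = c * j \<eta> v"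
    and j_lip: "\<And>\<eta>. \<exists>L. L-lipschitz_on K (j \<eta>)"
    and alpha: "\<alpha> \<ge> 0"
    and j_cross: "\<And>\<eta>1 \<eta>2 v1 v2. v1 \<in> K \<Longrightarrow> v2 \<in> K \<Longrightarrow>
        j \<eta>1 v2 - j \<eta>1 v1 + j \<eta>2 v1 - j \<eta>2 v2 \<le> \<alpha> * norm (\<eta>1 - \<eta>2) * norm (v1 - v2)"
begin

lemma scale_K: "c \<ge> 0 \<Longrightarrow> x \<in> K \<Longrightarrow> c *\<^sub>R x \<in> K"
  using K_cone unfolding cone_def by blast

lemma zero_K: "0 \<in> K"
proof -
  obtain k where "k \<in> K" using K_ne by blast
  from scale_K[OF _ this, of 0] show ?thesis by simp
qed

lemma mid_K: "x \<in> K \<Longrightarrow> y \<in> K \<Longrightarrow> (1/2) *\<^sub>R (x + y) \<in> K"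
  using convexD[OF K_convex, of x y "1/2" "1/2"] by (simp add: scaleR_add_right)

lemma add_K: "x \<in> K \<Longrightarrow> y \<in> K \<Longrightarrow> x + y \<in> K"
proof -
  assume "x \<in> K" "y \<in> K"
  from scale_K[OF _ mid_K[OF this], of 2] show ?thesis by simp
qed

lemma j0: "j \<eta> 0 = 0"
  using j_homog[of 2 0 \<eta>] zero_K by simp

lemma j_sub: "x \<in> K \<Longrightarrow> y \<in> K \<Longrightarrow> j \<eta> (x + y) \<le> j \<eta> x + j \<eta> y"
proof -
  assume xy: "x \<in> K" "y \<in> K"
  have "j \<eta> (x + y) = j \<eta> (2 *\<^sub>R ((1/2) *\<^sub>R (x + y)))" by simp
  also have "\<dots> = 2 * j \<eta> ((1/2) *\<^sub>R (x + y))" by (rule j_homog) (auto intro: mid_K xy)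
  also have "(1/2) *\<^sub>R (x + y) = (1 - 1/2) *\<^sub>R x + (1/2) *\<^sub>R y" by (simp add: scaleR_add_right)
  also have "j \<eta> \<dots> \<le> (1 - 1/2) * j \<eta> x + (1/2) * j \<eta> y"
    using convex_onD[OF j_convex, of "1/2" x y] xy by simp
  finally show ?thesis by simp
qed

lemma Cset_iff: "\<xi> \<in> Cset j K \<eta> \<longleftrightarrow> (\<forall>v\<in>K. \<xi> \<bullet> v \<le> j \<eta> v)"
  unfolding Cset_def Jfun_def by auto

definition VIsol :: "'a \<Rightarrow> 'a \<Rightarrow> 'a \<Rightarrow> bool" where
  "VIsol \<eta> h w \<longleftrightarrow> w \<in> K \<and> (\<forall>v\<in>K. (A w + h) \<bullet> (v - w) + j \<eta> v - j \<eta> w \<ge> 0)"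

lemma VI_ex: "\<exists>w. VIsol \<eta> h w"
proof -
  obtain L where lip: "L-lipschitz_on K (j \<eta>)" using j_lip by blast
  from vi_exists[OF K_closed K_convex K_ne j_convex lip mA LA A_mono A_lip, of "- h"]
  show ?thesis unfolding VIsol_def by auto
qed

lemma VI_lip:
  assumes "VIsol \<eta>1 h1 w1" "VIsol \<eta>2 h2 w2"
  shows "mA * norm (w1 - w2) \<le> norm (h1 - h2) + \<alpha> * norm (\<eta>1 - \<eta>2)"
proof -
  have w: "w1 \<in> K" "w2 \<in> K" using assms unfolding VIsol_def by auto
  have a: "(A w1 + h1) \<bullet> (w2 - w1) + j \<eta>1 w2 - j \<eta>1 w1 \<ge> 0" using assms unfolding VIsol_def by auto
  have b: "(A w2 + h2) \<bullet> (w1 - w2) + j \<eta>2 w1 - j \<eta>2 w2 \<ge> 0" using assms unfolding VIsol_def by auto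
  have c: "j \<eta>1 w2 - j \<eta>1 w1 + j \<eta>2 w1 - j \<eta>2 w2 \<le> \<alpha> * norm (\<eta>1 - \<eta>2) * norm (w1 - w2)"
    using j_cross w by blast
  define d where "d = w1 - w2"
  have e: "(A w1 + h1) \<bullet> (w2 - w1) + (A w2 + h2) \<bullet> (w1 - w2) = - ((A w1 - A w2) \<bullet> d) - (h1 - h2) \<bullet> d"
    unfolding d_def by (simp add: inner_diff_left inner_diff_right inner_add_left algebra_simps)
  have m: "(A w1 - A w2) \<bullet> d \<ge> mA * (norm d)^2" unfolding d_def by (rule A_mono)
  have hd: "(h1 - h2) \<bullet> d \<ge> - (norm (h1 - h2) * norm d)"
    using Cauchy_Schwarz_ineq2[of "h1 - h2" d] by (simp add: abs_le_iff)
  have "mA * (norm d)^2 \<le> norm (h1 - h2) * norm d + \<alpha> * norm (\<eta>1 - \<eta>2) * norm d"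
    using a b c e m hd unfolding d_def by linarith
  then have "norm d * (mA * norm d) \<le> norm d * (norm (h1 - h2) + \<alpha> * norm (\<eta>1 - \<eta>2))"
    by (simp add: power2_eq_square algebra_simps)
  then show ?thesis unfolding d_def[symmetric]
    by (cases "norm d = 0") (auto simp: mult_le_cancel_left_pos alpha)
qed

definition Phi :: "'a \<Rightarrow> 'a \<Rightarrow> 'a" where
  "Phi \<eta> h = (THE w. VIsol \<eta> h w)"

lemma VI_unique: "VIsol \<eta> h w1 \<Longrightarrow> VIsol \<eta> h w2 \<Longrightarrow> w1 = w2"
  using VI_lip[of \<eta> h w1 \<eta> h w2] mA by (simp add: zero_le_mult_iff mult_le_0_iff)

lemma Phi: "VIsol \<eta> h (Phi \<eta> h)"
  unfolding Phi_def using VI_ex VI_unique by (metis theI)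

lemma Phi_eq: "VIsol \<eta> h w \<Longrightarrow> Phi \<eta> h = w"
  using Phi VI_unique by blast

lemma Phi_K: "Phi \<eta> h \<in> K"
  using Phi unfolding VIsol_def by blast

lemma Phi_lip: "mA * norm (Phi \<eta>1 h1 - Phi \<eta>2 h2) \<le> norm (h1 - h2) + \<alpha> * norm (\<eta>1 - \<eta>2)"
  by (rule VI_lip[OF Phi Phi])

end



context prob begin

lemma prox_sol:
  assumes lip: "L-lipschitz_on K (j \<eta>)"
  shows "\<exists>w\<in>K. g - w \<in> Cset j K \<eta> \<and> (g - w) \<bullet> w = j \<eta> w \<and>
     (\<forall>v\<in>K. (w - g) \<bullet> (v - w) + j \<eta> v - j \<eta> w \<ge> 0)"
proof -
  obtain w where wK: "w \<in> K" and vi: "\<And>v. v \<in> K \<Longrightarrow> (w - g) \<bullet> (v - w) + j \<eta> v - j \<eta> w \<ge> 0"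
    using prox_exists[OF K_closed K_convex K_ne j_convex lip, of g] by blast
  have C: "g - w \<in> Cset j K \<eta>" unfolding Cset_iff
  proof
    fix v assume vK: "v \<in> K"
    have "(w - g) \<bullet> ((w + v) - w) + j \<eta> (w + v) - j \<eta> w \<ge> 0" using vi[OF add_K[OF wK vK]] .
    moreover have "j \<eta> (w + v) \<le> j \<eta> w + j \<eta> v" using j_sub[OF wK vK] .
    moreover have "(w - g) \<bullet> ((w + v) - w) = - ((g - w) \<bullet> v)" by (simp add: inner_diff_left)
    ultimately show "(g - w) \<bullet> v \<le> j \<eta> v" by linarith
  qed
  have "(w - g) \<bullet> (0 - w) + j \<eta> 0 - j \<eta> w \<ge> 0" using vi[OF zero_K] .
  moreover have "(w - g) \<bullet> (0 - w) = (g - w) \<bullet> w" by (simp add: inner_diff_left)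
  ultimately have "(g - w) \<bullet> w \<ge> j \<eta> w" using j0 by simp
  moreover have "(g - w) \<bullet> w \<le> j \<eta> w" using C wK unfolding Cset_iff by blast
  ultimately show ?thesis using wK C vi by (intro bexI[of _ w]) auto
qed

lemma support:
  assumes x0: "\<xi>0 \<in> Cset j K \<eta>" and mx: "\<And>\<xi>. \<xi> \<in> Cset j K \<eta> \<Longrightarrow> \<xi> \<bullet> v \<le> \<xi>0 \<bullet> v"
  shows "v \<in> K \<and> \<xi>0 \<bullet> v = j \<eta> v"
proof -
  obtain L where lip: "L-lipschitz_on K (j \<eta>)" using j_lip by blast
  have L0: "L \<ge> 0" using lip by (simp add: lipschitz_on_def)
  have jd: "j \<eta> a - j \<eta> b \<le> L * norm (a - b)" if "a \<in> K" "b \<in> K" for a b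
  proof -
    have "dist (j \<eta> a) (j \<eta> b) \<le> L * dist a b" using lip that by (simp add: lipschitz_on_def)
    then show ?thesis by (simp add: dist_norm dist_real_def abs_le_iff)
  qed
  have key: "t * (\<xi> \<bullet> v) = j \<eta> w + (norm (t *\<^sub>R v - w))^2"
    if "\<xi> = t *\<^sub>R v - w" "\<xi> \<bullet> w = j \<eta> w" for t w \<xi>
  proof -
    have "t * (\<xi> \<bullet> v) = \<xi> \<bullet> (t *\<^sub>R v)" by simp
    also have "t *\<^sub>R v = w + \<xi>" using that by simp
    also have "\<xi> \<bullet> (w + \<xi>) = \<xi> \<bullet> w + \<xi> \<bullet> \<xi>" by (simp add: inner_add_right)
    finally show ?thesis using that by (simp add: power2_norm_eq_inner)
  qed
  show ?thesis
  proof (cases "v \<in> K")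
    case True
    have "\<xi>0 \<bullet> v \<ge> j \<eta> v"
    proof (rule ccontr)
      assume "\<not> ?thesis"
      define \<delta> where "\<delta> = j \<eta> v - \<xi>0 \<bullet> v"
      have \<delta>0: "\<delta> > 0" using \<open>\<not> _\<close> unfolding \<delta>_def by simp
      define t where "t = 2 * L^2 / \<delta> + 1"
      have t0: "t > 0" unfolding t_def using \<delta>0 by (simp add: add_nonneg_pos)
      have td: "t * \<delta> = 2 * L^2 + \<delta>" unfolding t_def using \<delta>0 by (simp add: field_simps)
      obtain w where wK: "w \<in> K" and C: "t *\<^sub>R v - w \<in> Cset j K \<eta>"
        and xw: "(t *\<^sub>R v - w) \<bullet> w = j \<eta> w"
        and vi: "\<And>v'. v' \<in> K \<Longrightarrow> (w - t *\<^sub>R v) \<bullet> (v' - w) + j \<eta> v' - j \<eta> w \<ge> 0"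
        using prox_sol[OF lip, of "t *\<^sub>R v"] by blast
      define n where "n = norm (t *\<^sub>R v - w)"
      have tvK: "t *\<^sub>R v \<in> K" using scale_K t0 True by simp
      have "(w - t *\<^sub>R v) \<bullet> (t *\<^sub>R v - w) + j \<eta> (t *\<^sub>R v) - j \<eta> w \<ge> 0" using vi[OF tvK] .
      moreover have "(w - t *\<^sub>R v) \<bullet> (t *\<^sub>R v - w) = -(n^2)"
        unfolding n_def power2_norm_eq_inner by (simp add: inner_minus_left[symmetric])
      ultimately have "n^2 \<le> j \<eta> (t *\<^sub>R v) - j \<eta> w" by linarith
      also have "\<dots> \<le> L * n" unfolding n_def by (rule jd[OF tvK wK])
      finally have "n * n \<le> L * n" by (simp add: power2_eq_square)
      then have nL: "n \<le> L" using L0 by (cases "n = 0") (auto simp: n_def mult_le_cancel_right_pos)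
      have jw: "j \<eta> w \<ge> t * j \<eta> v - L * L"
      proof -
        have "j \<eta> (t *\<^sub>R v) - j \<eta> w \<le> L * n" using jd[OF tvK wK] unfolding n_def .
        moreover have "L * n \<le> L * L" using nL L0 by (rule mult_left_mono)
        moreover have "j \<eta> (t *\<^sub>R v) = t * j \<eta> v" using j_homog t0 True by blast
        ultimately show ?thesis by linarith
      qed
      have "t * ((t *\<^sub>R v - w) \<bullet> v) = j \<eta> w + n^2" unfolding n_def by (rule key) (auto simp: xw)
      moreover have "(t *\<^sub>R v - w) \<bullet> v \<le> \<xi>0 \<bullet> v" using mx[OF C] .
      then have "t * ((t *\<^sub>R v - w) \<bullet> v) \<le> t * (\<xi>0 \<bullet> v)" using t0 by simp
      ultimately have "t * (\<xi>0 \<bullet> v) \<ge> t * j \<eta> v - L * L" using jw by (smt (verit) zero_le_power2)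
      moreover have "t * \<delta> = t * j \<eta> v - t * (\<xi>0 \<bullet> v)" unfolding \<delta>_def by (simp add: algebra_simps)
      ultimately have "t * \<delta> \<le> L * L" by linarith
      with td \<delta>0 show False using mult_nonneg_nonneg[OF L0 L0] by (simp add: power2_eq_square)
    qed
    moreover have "\<xi>0 \<bullet> v \<le> j \<eta> v" using x0 True unfolding Cset_iff by blast
    ultimately show ?thesis using True by simp
  next
    case False
    define e where "e = infdist v K"
    have e0: "e > 0" unfolding e_def by (rule infdist_pos_not_in_closed[OF K_closed K_ne False])
    have ek: "e \<le> norm (v - k)" if "k \<in> K" for k
      unfolding e_def using infdist_le[OF that, of v] by (simp add: dist_norm)
    define t where "t = (\<bar>\<xi>0 \<bullet> v\<bar> + L * norm v + L^2 + 1) / e^2 + 1"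
    have "0 \<le> (\<bar>\<xi>0 \<bullet> v\<bar> + L * norm v + L^2 + 1) / e^2"
      using L0 e0 by (intro divide_nonneg_pos) (auto intro!: add_nonneg_nonneg mult_nonneg_nonneg)
    then have t1: "t \<ge> 1" unfolding t_def by simp
    have te: "t * e^2 \<ge> \<xi>0 \<bullet> v + L * norm v + L^2 + 1"
    proof -
      have "t * e^2 = (\<bar>\<xi>0 \<bullet> v\<bar> + L * norm v + L^2 + 1) + e^2" unfolding t_def using e0 by (simp add: field_simps)
      then show ?thesis by (smt (verit) abs_ge_self zero_le_power2)
    qed
    obtain w where wK: "w \<in> K" and C: "t *\<^sub>R v - w \<in> Cset j K \<eta>"
      and xw: "(t *\<^sub>R v - w) \<bullet> w = j \<eta> w"
      and vi: "\<And>v'. v' \<in> K \<Longrightarrow> (w - t *\<^sub>R v) \<bullet> (v' - w) + j \<eta> v' - j \<eta> w \<ge> 0"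
      using prox_sol[OF lip, of "t *\<^sub>R v"] by blast
    define n where "n = norm (t *\<^sub>R v - w)"
    have "(inverse t) *\<^sub>R w \<in> K" using scale_K[OF _ wK, of "inverse t"] t1 by simp
    then have "e \<le> norm (v - (inverse t) *\<^sub>R w)" by (rule ek)
    also have "t *\<^sub>R (v - (inverse t) *\<^sub>R w) = t *\<^sub>R v - w" using t1 by (simp add: scaleR_diff_right)
    then have "norm (v - (inverse t) *\<^sub>R w) = n / t"
      unfolding n_def using t1 by (metis norm_scaleR abs_of_pos less_le_trans zero_less_one nonzero_mult_div_cancel_left less_numeral_extra(3) order_less_irrefl)
    finally have "e \<le> n / t" .
    then have ne: "t * e \<le> n" using t1 by (simp add: field_simps)
    have n2: "t^2 * e^2 \<le> n^2"
      using power_mono[OF ne, of 2] e0 t1 by (simp add: power_mult_distrib)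
    have jw: "j \<eta> w \<ge> - (L * norm w)"
      using jd[OF zero_K wK] j0 by simp
    have nw: "norm w \<le> t * norm v + L"
    proof -
      have "(w - t *\<^sub>R v) \<bullet> (0 - w) + j \<eta> 0 - j \<eta> w \<ge> 0" using vi[OF zero_K] .
      then have "(norm w)^2 \<le> (t *\<^sub>R v) \<bullet> w - j \<eta> w"
        using j0 by (simp add: inner_diff_left power2_norm_eq_inner)
      also have "(t *\<^sub>R v) \<bullet> w \<le> t * norm v * norm w"
        using Cauchy_Schwarz_ineq2[of "t *\<^sub>R v" w] t1 by (simp add: abs_le_iff)
      finally have "norm w * norm w \<le> norm w * (t * norm v + L)"
        using jw by (simp add: power2_eq_square algebra_simps)
      then show ?thesis
        using add_nonneg_nonneg[OF mult_nonneg_nonneg[OF order_trans[OF zero_le_one t1] norm_ge_zero[of v]] L0]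
        by (cases "norm w = 0") (auto simp: mult_le_cancel_left_pos)
    qed
    have "t * ((t *\<^sub>R v - w) \<bullet> v) = j \<eta> w + n^2" unfolding n_def by (rule key) (auto simp: xw)
    moreover have "(t *\<^sub>R v - w) \<bullet> v \<le> \<xi>0 \<bullet> v" using mx[OF C] .
    then have "t * ((t *\<^sub>R v - w) \<bullet> v) \<le> t * (\<xi>0 \<bullet> v)" using t1 by simp
    moreover have "L * norm w \<le> L * (t * norm v + L)" using nw L0 by (rule mult_left_mono)
    ultimately have A1: "t * (\<xi>0 \<bullet> v) \<ge> - (L * (t * norm v + L)) + t^2 * e^2"
      using jw n2 by linarith
    have "t^2 * e^2 = t * (t * e^2)" by (simp add: power2_eq_square)
    also have "\<dots> \<ge> t * (\<xi>0 \<bullet> v + L * norm v + L^2 + 1)" using te t1 by simp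
    finally have A2: "t^2 * e^2 \<ge> t * (\<xi>0 \<bullet> v) + t * (L * norm v) + t * L^2 + t"
      by (simp add: algebra_simps)
    have A3: "t * L^2 \<ge> L^2" using t1 by (simp add: mult_le_cancel_right1)
    have "L * (t * norm v + L) = t * (L * norm v) + L^2" by (simp add: algebra_simps power2_eq_square)
    then have "t * (\<xi>0 \<bullet> v) \<ge> t * (\<xi>0 \<bullet> v) + t" using A1 A2 A3 by linarith
    then show ?thesis using t1 by simp
  qed
qed

lemma E1:
  assumes "VIsol \<eta> (r - f t) w"
  shows "- w \<in> normal_cone (Ct f j K \<eta> t) (A w + r)"
proof -
  define \<xi> where "\<xi> = f t - (A w + r)"
  have wK: "w \<in> K" and vi: "\<And>v. v \<in> K \<Longrightarrow> (A w + (r - f t)) \<bullet> (v - w) + j \<eta> v - j \<eta> w \<ge> 0"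
    using assms unfolding VIsol_def by auto
  have neg: "A w + (r - f t) = - \<xi>" unfolding \<xi>_def by simp
  have C: "\<xi> \<in> Cset j K \<eta>" unfolding Cset_iff
  proof
    fix v assume vK: "v \<in> K"
    have "(A w + (r - f t)) \<bullet> ((w + v) - w) + j \<eta> (w + v) - j \<eta> w \<ge> 0" using vi[OF add_K[OF wK vK]] .
    moreover have "j \<eta> (w + v) \<le> j \<eta> w + j \<eta> v" using j_sub[OF wK vK] .
    moreover have "(A w + (r - f t)) \<bullet> ((w + v) - w) = - (\<xi> \<bullet> v)" unfolding neg by simp
    ultimately show "\<xi> \<bullet> v \<le> j \<eta> v" by linarith
  qed
  have "(A w + (r - f t)) \<bullet> (0 - w) + j \<eta> 0 - j \<eta> w \<ge> 0" using vi[OF zero_K] .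
  moreover have "(A w + (r - f t)) \<bullet> (0 - w) = \<xi> \<bullet> w" unfolding neg by simp
  ultimately have "\<xi> \<bullet> w \<ge> j \<eta> w" using j0 by simp
  moreover have "\<xi> \<bullet> w \<le> j \<eta> w" using C wK unfolding Cset_iff by blast
  ultimately have xw: "\<xi> \<bullet> w = j \<eta> w" by simp
  have mem: "A w + r \<in> Ct f j K \<eta> t" unfolding Ct_def using C
    by (intro image_eqI[of _ _ \<xi>]) (auto simp: \<xi>_def)
  have "(- w) \<bullet> (y - (A w + r)) \<le> 0" if yC: "y \<in> Ct f j K \<eta> t" for y
  proof -
    obtain \<xi>' where C': "\<xi>' \<in> Cset j K \<eta>" and y: "y = f t - \<xi>'" using yC unfolding Ct_def by blast
    have "y - (A w + r) = \<xi> - \<xi>'" unfolding y \<xi>_def by simp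
    then have "(- w) \<bullet> (y - (A w + r)) = \<xi>' \<bullet> w - \<xi> \<bullet> w"
      by (simp add: inner_diff_right inner_commute)
    moreover have "\<xi>' \<bullet> w \<le> j \<eta> w" using C' wK unfolding Cset_iff by blast
    ultimately show ?thesis using xw by simp
  qed
  then show ?thesis unfolding normal_cone_def using mem by auto
qed

lemma E2:
  assumes "- w \<in> normal_cone (Ct f j K \<eta> t) (A w + r)"
  shows "VIsol \<eta> (r - f t) w"
proof -
  define \<xi> where "\<xi> = f t - (A w + r)"
  have mem: "A w + r \<in> Ct f j K \<eta> t" and nc: "\<And>y. y \<in> Ct f j K \<eta> t \<Longrightarrow> (- w) \<bullet> (y - (A w + r)) \<le> 0"
    using assms unfolding normal_cone_def by (auto split: if_splits)
  obtain \<xi>1 where C1: "\<xi>1 \<in> Cset j K \<eta>" and x1: "A w + r = f t - \<xi>1" using mem unfolding Ct_def by blast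
  have "\<xi> = \<xi>1" unfolding \<xi>_def x1 by simp
  with C1 have C: "\<xi> \<in> Cset j K \<eta>" by simp
  have "\<xi>' \<bullet> w \<le> \<xi> \<bullet> w" if "\<xi>' \<in> Cset j K \<eta>" for \<xi>'
  proof -
    have "f t - \<xi>' \<in> Ct f j K \<eta> t" unfolding Ct_def using that by blast
    from nc[OF this] have "(- w) \<bullet> ((f t - \<xi>') - (A w + r)) \<le> 0" .
    moreover have "(f t - \<xi>') - (A w + r) = \<xi> - \<xi>'" unfolding \<xi>_def by simp
    ultimately show ?thesis by (simp add: inner_diff_right inner_commute)
  qed
  from support[OF C this] have wK: "w \<in> K" and xw: "\<xi> \<bullet> w = j \<eta> w" by auto
  show ?thesis unfolding VIsol_def
  proof (intro conjI wK ballI)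
    fix v assume vK: "v \<in> K"
    have neg: "A w + (r - f t) = - \<xi>" unfolding \<xi>_def by simp
    have "(A w + (r - f t)) \<bullet> (v - w) + j \<eta> v - j \<eta> w = j \<eta> v - \<xi> \<bullet> v"
      unfolding neg using xw by (simp add: inner_diff_right)
    moreover have "\<xi> \<bullet> v \<le> j \<eta> v" using C vK unfolding Cset_iff by blast
    ultimately show "(A w + (r - f t)) \<bullet> (v - w) + j \<eta> v - j \<eta> w \<ge> 0" by simp
  qed
qed

end



lemma pow_int:
  assumes "(t::real) \<ge> 0"
  shows "integral {0..t} (\<lambda>s. s^n) = t^(Suc n) / real (Suc n)"
proof -
  have "((\<lambda>s. s^n) has_integral (t^(Suc n) / real (Suc n) - 0^(Suc n) / real (Suc n))) {0..t}"
  proof (rule fundamental_theorem_of_calculus[OF assms])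
    fix x assume "x \<in> {0..t}"
    have d: "((\<lambda>s. s^(Suc n)) has_real_derivative (real (Suc n) * x^n)) (at x)"
      using DERIV_pow[of "Suc n" x] by simp
    have "((\<lambda>s. s^(Suc n) / real (Suc n)) has_real_derivative (real (Suc n) * x^n) / real (Suc n)) (at x)"
      by (rule DERIV_cdivide[OF d])
    then have "((\<lambda>s. s^(Suc n) / real (Suc n)) has_real_derivative x^n) (at x)"
      by (simp del: of_nat_Suc)
    then have "((\<lambda>s. s^(Suc n) / real (Suc n)) has_real_derivative x^n) (at x within {0..t})"
      by (rule has_field_derivative_at_within)
    then show "((\<lambda>s. s^(Suc n) / real (Suc n)) has_vector_derivative x^n) (at x within {0..t})"
      by (simp add: has_real_derivative_iff_has_vector_derivative)
  qed
  then show ?thesis by (simp add: integral_unique)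
qed

lemma iter_bound:
  fixes \<phi> \<psi> :: "real \<Rightarrow> real"
  assumes K: "0 \<le> K" and c: "continuous_on {0..b} \<psi>" and t: "t \<in> {0..b}"
    and bd: "\<And>s. s \<in> {0..b} \<Longrightarrow> \<psi> s \<le> M * (K * s)^n / fact n"
    and ph: "\<phi> t \<le> K * integral {0..t} \<psi>"
  shows "\<phi> t \<le> M * (K * t)^(Suc n) / fact (Suc n)"
proof -
  define c0 where "c0 = M * K^n / fact n"
  have sub: "{0..t} \<subseteq> {0..b}" using t by auto
  have "integral {0..t} \<psi> \<le> integral {0..t} (\<lambda>s. c0 * s^n)"
  proof (rule integral_le)
    show "\<psi> integrable_on {0..t}" by (rule integrable_continuous_real[OF continuous_on_subset[OF c sub]])
    show "(\<lambda>s. c0 * s^n) integrable_on {0..t}" by (intro integrable_continuous_real continuous_intros)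
    fix s assume "s \<in> {0..t}"
    then have "\<psi> s \<le> M * (K * s)^n / fact n" using bd sub by blast
    also have "\<dots> = c0 * s^n" unfolding c0_def by (simp add: power_mult_distrib)
    finally show "\<psi> s \<le> c0 * s^n" .
  qed
  also have "integral {0..t} (\<lambda>s. c0 * s^n) = c0 * integral {0..t} (\<lambda>s. s^n)"
    by (rule integral_mult[symmetric]) (intro integrable_continuous_real continuous_intros)
  also have "\<dots> = c0 * (t^(Suc n) / real (Suc n))" using t by (simp add: pow_int)
  finally have "K * integral {0..t} \<psi> \<le> K * (c0 * (t^(Suc n) / real (Suc n)))" using K by (rule mult_left_mono)
  also have "K * (c0 * (t^(Suc n) / real (Suc n))) = M * (K * t)^(Suc n) / fact (Suc n)"
    unfolding c0_def by (simp add: power_mult_distrib field_simps)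
  finally show ?thesis using ph by linarith
qed

lemma pow_fact_lim: "(\<lambda>n. M * (x::real)^n / fact n) \<longlonglongrightarrow> 0"
proof -
  have "(\<lambda>n. inverse (fact n) * x^n) \<longlonglongrightarrow> 0" by (rule summable_LIMSEQ_zero[OF summable_exp])
  then have "(\<lambda>n. M * (inverse (fact n) * x^n)) \<longlonglongrightarrow> 0" by (rule tendsto_mult_right_zero)
  then show ?thesis by (simp add: field_simps)
qed

lemma gronwall0:
  fixes \<phi> :: "real \<Rightarrow> real"
  assumes K: "0 \<le> K" and c: "continuous_on {0..b} \<phi>" and nn: "\<And>t. t \<in> {0..b} \<Longrightarrow> 0 \<le> \<phi> t"
    and le: "\<And>t. t \<in> {0..b} \<Longrightarrow> \<phi> t \<le> K * integral {0..t} \<phi>"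
  shows "\<And>t. t \<in> {0..b} \<Longrightarrow> \<phi> t = 0"
proof -
  fix t assume t: "t \<in> {0..b}"
  then have ne: "{0..b} \<noteq> {}" by auto
  obtain x where "x \<in> {0..b}" and xm: "\<And>y. y \<in> {0..b} \<Longrightarrow> \<phi> y \<le> \<phi> x"
    using continuous_attains_sup[OF compact_Icc ne c] by blast
  define M where "M = \<phi> x"
  have bd: "\<phi> s \<le> M * (K * s)^n / fact n" if "s \<in> {0..b}" for s n
    using that
  proof (induction n arbitrary: s)
    case 0 then show ?case using xm unfolding M_def by simp
  next
    case (Suc n)
    show ?case by (rule iter_bound[where \<phi>=\<phi> and \<psi>=\<phi>, OF K c Suc.prems Suc.IH le[OF Suc.prems]])
  qed
  have "\<phi> t \<le> 0"
    by (rule LIMSEQ_le[OF tendsto_const pow_fact_lim[of M "K * t"]]) (use bd t in auto)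
  with nn[OF t] show "\<phi> t = 0" by simp
qed




context prob begin

lemma LB0: "LB \<ge> 0" using B_lip by (simp add: lipschitz_on_def)

lemma B_norm: "norm (B x - B y) \<le> LB * norm (x - y)"
  using B_lip by (simp add: lipschitz_on_def dist_norm)

lemma B_cont: "continuous_on UNIV B" by (rule lipschitz_on_continuous_on[OF B_lip])

lemma Phi_cont: "continuous_on UNIV (\<lambda>p. Phi (fst p) (snd p))"
proof (rule lipschitz_on_continuous_on[of "(1 + \<alpha>) / mA"], rule lipschitz_onI)
  fix p q :: "'a \<times> 'a"
  have "norm (snd (p - q)) \<le> norm (p - q)" using norm_snd_le[of "snd (p - q)" "fst (p - q)"] by (simp only: prod.collapse)
  then have n1: "norm (snd p - snd q) \<le> norm (p - q)" by simp
  have "norm (fst (p - q)) \<le> norm (p - q)" using norm_fst_le[of "fst (p - q)" "snd (p - q)"] by (simp only: prod.collapse)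
  then have n2: "norm (fst p - fst q) \<le> norm (p - q)" by simp
  have "mA * norm (Phi (fst p) (snd p) - Phi (fst q) (snd q)) \<le> norm (snd p - snd q) + \<alpha> * norm (fst p - fst q)"
    by (rule Phi_lip)
  also have "\<dots> \<le> norm (p - q) + \<alpha> * norm (p - q)" using n1 n2 alpha by (intro add_mono mult_left_mono) auto
  finally have "mA * norm (Phi (fst p) (snd p) - Phi (fst q) (snd q)) \<le> (1 + \<alpha>) * norm (p - q)"
    by (simp add: algebra_simps)
  then show "dist (Phi (fst p) (snd p)) (Phi (fst q) (snd q)) \<le> (1 + \<alpha>) / mA * dist p q"
    using mA by (simp add: dist_norm field_simps)
  show "0 \<le> (1 + \<alpha>) / mA" using mA alpha by simp
qed

definition G :: "(real \<Rightarrow> 'a) \<Rightarrow> real \<Rightarrow> 'a" where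
  "G u s = Phi (u s) (B (u s) + S u s - f s)"

definition Gam :: "(real \<Rightarrow> 'a) \<Rightarrow> real \<Rightarrow> 'a" where
  "Gam u t = u0 + Pint 0 t (G u)"

lemma G_cont:
  assumes "continuous_on I u"
  shows "continuous_on I (G u)"
proof -
  have c: "continuous_on I (\<lambda>s. (u s, B (u s) + S u s - f s))"
    by (intro continuous_on_Pair continuous_on_diff continuous_on_add assms S_maps f_cont
        continuous_on_compose2[OF B_cont assms]) auto
  show ?thesis unfolding G_def using continuous_on_compose2[OF Phi_cont c] by simp
qed

lemma I_0: "0 \<in> I" using I by auto
lemma I_nonneg: "t \<in> I \<Longrightarrow> 0 \<le> t" using I by auto

lemma LOC:
  assumes "t \<in> I"
  shows "\<exists>b>0. t \<le> b \<and> {0..b} \<subseteq> I \<and> at t within I = at t within {0..b}"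
  using I
proof
  assume "T > 0 \<and> I = {0..T}"
  then show ?thesis using assms by (intro exI[of _ T]) auto
next
  assume I': "I = {0..}"
  then have t0: "t \<ge> 0" using assms by simp
  have "at t within {0..} = at t within {0..t+1}"
    by (rule at_within_nhd[of t "{t - 1<..<t + 1}"]) auto
  then show ?thesis using t0 I' by (intro exI[of _ "t + 1"]) auto
qed

lemma cont_I:
  assumes "\<And>b. b > 0 \<Longrightarrow> {0..b} \<subseteq> I \<Longrightarrow> continuous_on {0..b} h"
  shows "continuous_on I h"
  unfolding continuous_on_eq_continuous_within
proof
  fix t assume t: "t \<in> I"
  obtain b where b: "b > 0" "t \<le> b" "{0..b} \<subseteq> I" and at: "at t within I = at t within {0..b}"
    using LOC[OF t] by blast
  have "t \<in> {0..b}" using b I_nonneg[OF t] by auto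
  then have "continuous (at t within {0..b}) h"
    using assms[OF b(1) b(3)] unfolding continuous_on_eq_continuous_within by blast
  then show "continuous (at t within I) h" unfolding at .
qed

lemma hist:
  assumes "b > 0" "{0..b} \<subseteq> I"
  shows "\<exists>LS>0. \<forall>u v. continuous_on I u \<longrightarrow> continuous_on I v \<longrightarrow>
     (\<forall>t\<in>{0..b}. norm (S u t - S v t) \<le> LS * integral {0..t} (\<lambda>s. norm (u s - v s)))"
  using S_hist assms unfolding history_dependent_def by (meson compact_Icc)

lemma Pint_cont:
  assumes "continuous_on {0..b} g"
  shows "continuous_on {0..b} (\<lambda>t. Pint 0 t g)"
  unfolding continuous_on_eq_continuous_within
  using has_vector_derivative_continuous[OF Pint_deriv[OF assms]] by blast

lemma Gam_cont:
  assumes "continuous_on I u"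
  shows "continuous_on I (Gam u)"
proof (rule cont_I)
  fix b :: real assume "b > 0" "{0..b} \<subseteq> I"
  then have "continuous_on {0..b} (G u)" using continuous_on_subset[OF G_cont[OF assms]] by blast
  then show "continuous_on {0..b} (Gam u)" unfolding Gam_def
    by (intro continuous_intros Pint_cont)
qed

lemma Gam_est:
  assumes b: "b > 0" "{0..b} \<subseteq> I" and LS: "LS > 0"
    and hS: "\<forall>u v. continuous_on I u \<longrightarrow> continuous_on I v \<longrightarrow>
     (\<forall>t\<in>{0..b}. norm (S u t - S v t) \<le> LS * integral {0..t} (\<lambda>s. norm (u s - v s)))"
    and u: "continuous_on I u" and v: "continuous_on I v" and t: "t \<in> {0..b}"
  shows "norm (Gam u t - Gam v t) \<le> ((LB + \<alpha> + LS * b) / mA) * integral {0..t} (\<lambda>s. norm (u s - v s))"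
proof -
  have subb: "{0..t} \<subseteq> {0..b}" using t by auto
  have subI: "{0..t} \<subseteq> I" using subb b by auto
  define \<phi> where "\<phi> s = norm (u s - v s)" for s
  define C where "C = integral {0..t} \<phi>"
  have \<phi>c: "continuous_on {0..t} \<phi>" unfolding \<phi>_def
    using continuous_on_subset[OF u subI] continuous_on_subset[OF v subI] by (intro continuous_intros)
  have C0: "C \<ge> 0" unfolding C_def \<phi>_def by (rule integral_nonneg) (auto intro: integrable_continuous_real \<phi>c[unfolded \<phi>_def])
  have cu: "continuous_on {0..t} (G u)" using continuous_on_subset[OF G_cont[OF u] subI] .
  have cv: "continuous_on {0..t} (G v)" using continuous_on_subset[OF G_cont[OF v] subI] .
  define a where "a = (LB + \<alpha>) / mA"
  define c where "c = LS * C / mA"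
  have pw: "norm (G u s - G v s) \<le> a * \<phi> s + c" if s: "s \<in> {0..t}" for s
  proof -
    have Cs: "integral {0..s} \<phi> \<le> C" unfolding C_def
    proof (rule integral_subset_le)
      show "{0..s} \<subseteq> {0..t}" using s by auto
      show "\<phi> integrable_on {0..s}" using s by (intro integrable_continuous_real continuous_on_subset[OF \<phi>c]) auto
      show "\<phi> integrable_on {0..t}" by (intro integrable_continuous_real \<phi>c)
    qed (simp add: \<phi>_def)
    have Ss: "norm (S u s - S v s) \<le> LS * integral {0..s} \<phi>"
      using hS u v s subb unfolding \<phi>_def by blast
    also have "\<dots> \<le> LS * C" using Cs LS by simp
    finally have Ss': "norm (S u s - S v s) \<le> LS * C" .
    have "mA * norm (G u s - G v s) \<le> norm ((B (u s) + S u s - f s) - (B (v s) + S v s - f s)) + \<alpha> * \<phi> s"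
      unfolding G_def \<phi>_def by (rule Phi_lip)
    also have "(B (u s) + S u s - f s) - (B (v s) + S v s - f s) = (B (u s) - B (v s)) + (S u s - S v s)" by simp
    also have "norm \<dots> \<le> norm (B (u s) - B (v s)) + norm (S u s - S v s)" by (rule norm_triangle_ineq)
    finally have "mA * norm (G u s - G v s) \<le> LB * \<phi> s + LS * C + \<alpha> * \<phi> s"
      using B_norm[of "u s" "v s"] Ss' unfolding \<phi>_def by linarith
    moreover have "mA * (a * \<phi> s + c) = LB * \<phi> s + LS * C + \<alpha> * \<phi> s"
      unfolding a_def c_def using mA by (simp add: field_simps)
    ultimately have "mA * norm (G u s - G v s) \<le> mA * (a * \<phi> s + c)" by linarith
    then show ?thesis using mA by simp
  qed
  have "norm (Gam u t - Gam v t) = norm (Pint 0 t (G u) - Pint 0 t (G v))" unfolding Gam_def by simp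
  also have "\<dots> \<le> integral {0..t} (\<lambda>s. norm (G u s - G v s))" by (rule Pint_norm[OF cu cv])
  also have "\<dots> \<le> integral {0..t} (\<lambda>s. a * \<phi> s + c)"
    using pw cu cv \<phi>c by (intro integral_le integrable_continuous_real continuous_intros) auto
  also have "integral {0..t} (\<lambda>s. a * \<phi> s + c) = a * C + c * t"
  proof -
    have i1: "(\<lambda>s. a * \<phi> s) integrable_on {0..t}" using \<phi>c by (intro integrable_continuous_real continuous_intros)
    have "integral {0..t} (\<lambda>s. a * \<phi> s + c) = integral {0..t} (\<lambda>s. a * \<phi> s) + integral {0..t} (\<lambda>s. c)"
      by (rule integral_add[OF i1]) (intro integrable_continuous_real continuous_intros)
    also have "integral {0..t} (\<lambda>s. a * \<phi> s) = a * C"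
      unfolding C_def by (rule integral_mult[symmetric]) (intro integrable_continuous_real \<phi>c)
    also have "integral {0..t} (\<lambda>s. c) = c * t" using t by simp
    finally show ?thesis .
  qed
  also have "a * C + c * t \<le> ((LB + \<alpha> + LS * b) / mA) * C"
  proof -
    have "c * t \<le> (LS * b / mA) * C" unfolding c_def using t LS mA C0
      by (simp add: field_simps mult_left_mono)
    moreover have "((LB + \<alpha> + LS * b) / mA) * C = a * C + (LS * b / mA) * C"
      unfolding a_def using mA by (simp add: field_simps)
    ultimately show ?thesis by linarith
  qed
  finally show ?thesis unfolding C_def \<phi>_def .
qed

end



context prob begin

lemma I_interval: "t \<in> I \<Longrightarrow> {0..t} \<subseteq> I"
  using I by auto

lemma fix_unique:
  assumes u: "continuous_on I u" and w: "continuous_on I w"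
    and fu: "\<And>t. t \<in> I \<Longrightarrow> u t = Gam u t" and fw: "\<And>t. t \<in> I \<Longrightarrow> w t = Gam w t"
    and t1: "t1 \<in> I"
  shows "u t1 = w t1"
proof -
  obtain b where b: "b > 0" "t1 \<le> b" "{0..b} \<subseteq> I" using LOC[OF t1] by blast
  obtain LS where LS: "LS > 0" and hS: "\<forall>u v. continuous_on I u \<longrightarrow> continuous_on I v \<longrightarrow>
     (\<forall>t\<in>{0..b}. norm (S u t - S v t) \<le> LS * integral {0..t} (\<lambda>s. norm (u s - v s)))"
    using hist[OF b(1) b(3)] by blast
  define K where "K = (LB + \<alpha> + LS * b) / mA"
  have K0: "K \<ge> 0" unfolding K_def using LB0 alpha LS b mA by simp
  have "norm (u t - w t) = 0" if "t \<in> {0..b}" for t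
  proof (rule gronwall0[where \<phi>="\<lambda>s. norm (u s - w s)", OF K0 _ _ _ that])
    show "continuous_on {0..b} (\<lambda>s. norm (u s - w s))"
      using continuous_on_subset[OF u b(3)] continuous_on_subset[OF w b(3)] by (intro continuous_intros)
    show "0 \<le> norm (u s - w s)" for s by simp
    fix s assume s: "s \<in> {0..b}"
    then have "s \<in> I" using b by auto
    then have "norm (u s - w s) = norm (Gam u s - Gam w s)" using fu fw by simp
    also have "\<dots> \<le> K * integral {0..s} (\<lambda>s. norm (u s - w s))"
      unfolding K_def by (rule Gam_est[OF b(1) b(3) LS hS u w s])
    finally show "norm (u s - w s) \<le> K * integral {0..s} (\<lambda>s. norm (u s - w s))" .
  qed
  then show ?thesis using b I_nonneg[OF t1] by auto
qed

definition U :: "nat \<Rightarrow> real \<Rightarrow> 'a" where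
  "U n = (Gam ^^ n) (\<lambda>_. u0)"

lemma U_Suc: "U (Suc n) = Gam (U n)" by (simp add: U_def)

lemma U_cont: "continuous_on I (U n)"
  by (induction n) (auto simp: U_Suc intro: Gam_cont simp add: U_def)

lemma U_unif:
  assumes b: "b > 0" "{0..b} \<subseteq> I"
  shows "uniform_limit {0..b} U (\<lambda>t. lim (\<lambda>n. U n t)) sequentially"
proof -
  obtain LS where LS: "LS > 0" and hS: "\<forall>u v. continuous_on I u \<longrightarrow> continuous_on I v \<longrightarrow>
     (\<forall>t\<in>{0..b}. norm (S u t - S v t) \<le> LS * integral {0..t} (\<lambda>s. norm (u s - v s)))"
    using hist[OF b] by blast
  define K where "K = (LB + \<alpha> + LS * b) / mA"
  have K0: "K \<ge> 0" unfolding K_def using LB0 alpha LS b mA by simp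
  have cU: "continuous_on {0..b} (U n)" for n using continuous_on_subset[OF U_cont b(2)] .
  have ne: "{0..b} \<noteq> {}" using b by auto
  have cD: "continuous_on {0..b} (\<lambda>s. norm (U (Suc n) s - U n s))" for n
    using cU[of n] cU[of "Suc n"] by (intro continuous_intros)
  obtain x where "x \<in> {0..b}" and xm: "\<And>y. y \<in> {0..b} \<Longrightarrow> norm (U 1 y - U 0 y) \<le> norm (U 1 x - U 0 x)"
    using continuous_attains_sup[OF compact_Icc ne cD[of 0]] by auto
  define M where "M = norm (U 1 x - U 0 x)"
  have M0: "M \<ge> 0" unfolding M_def by simp
  have D: "norm (U (Suc n) t - U n t) \<le> M * (K * t)^n / fact n" if "t \<in> {0..b}" for n t
    using that
  proof (induction n arbitrary: t)
    case 0 then show ?case using xm unfolding M_def by simp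
  next
    case (Suc n)
    show ?case
    proof (rule iter_bound[where \<phi>="\<lambda>t. norm (U (Suc (Suc n)) t - U (Suc n) t)"
          and \<psi>="\<lambda>s. norm (U (Suc n) s - U n s)", OF K0 cD Suc.prems Suc.IH])
      show "norm (U (Suc (Suc n)) t - U (Suc n) t) \<le> K * integral {0..t} (\<lambda>s. norm (U (Suc n) s - U n s))"
      proof -
        have e1: "U (Suc (Suc n)) t = Gam (U (Suc n)) t" by (simp only: U_Suc)
        have e2: "U (Suc n) t = Gam (U n) t" by (simp only: U_Suc)
        show ?thesis unfolding e1 e2 K_def
          by (rule Gam_est[OF b(1) b(2) LS hS U_cont U_cont Suc.prems])
      qed
    qed
  qed
  define c where "c k = M * (K * b)^k / fact k" for k
  have c0: "c k \<ge> 0" for k unfolding c_def using M0 K0 b by simp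
  have csum: "summable c"
  proof -
    have "summable (\<lambda>k. M * (inverse (fact k) * (K * b)^k))" by (intro summable_mult summable_exp)
    then show ?thesis unfolding c_def by (simp add: field_simps)
  qed
  have Dc: "norm (U (Suc k) t - U k t) \<le> c k" if "t \<in> {0..b}" for k t
  proof -
    have "(K * t)^k \<le> (K * b)^k" using that K0 by (intro power_mono mult_left_mono) auto
    then have "M * (K * t)^k / fact k \<le> M * (K * b)^k / fact k" using M0 by (intro divide_right_mono mult_left_mono) auto
    then show ?thesis using D[OF that, of k] unfolding c_def by linarith
  qed
  have tail: "norm (U n t - U m t) \<le> (\<Sum>i. c (i + m))" if "t \<in> {0..b}" "m \<le> n" for m n t
  proof -
    have "U n t - U m t = (\<Sum>k = m..<n. U (Suc k) t - U k t)" using sum_Suc_diff'[OF that(2), of "\<lambda>k. U k t"] by simp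
    then have "norm (U n t - U m t) \<le> (\<Sum>k = m..<n. norm (U (Suc k) t - U k t))" by (simp add: norm_sum)
    also have "\<dots> \<le> (\<Sum>k = m..<n. c k)" using Dc[OF that(1)] by (intro sum_mono)
    also have "\<dots> \<le> (\<Sum>i. c (i + m))"
    proof -
      have split: "sum c {0..<m} + sum c {m..<n} = sum c {0..<n}"
        by (rule sum.atLeastLessThan_concat) (use that in auto)
      have "sum c {0..<n} \<le> suminf c" by (rule sum_le_suminf[OF csum]) (auto simp: c0)
      moreover have "suminf c = (\<Sum>i. c (i + m)) + sum c {..<m}" by (rule suminf_split_initial_segment[OF csum])
      moreover have "sum c {0..<m} = sum c {..<m}" by (simp add: atLeast0LessThan)
      ultimately show ?thesis using split by linarith
    qed
    finally show ?thesis .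
  qed
  have "uniformly_Cauchy_on {0..b} U"
  proof (rule uniformly_Cauchy_onI')
    fix e :: real assume e: "e > 0"
    obtain N where N: "\<And>m. m \<ge> N \<Longrightarrow> norm (\<Sum>i. c (i + m)) < e" using suminf_exist_split[OF e csum] by blast
    show "\<exists>M. \<forall>x\<in>{0..b}. \<forall>m\<ge>M. \<forall>n>m. dist (U m x) (U n x) < e"
    proof (intro exI[of _ N] ballI allI impI)
      fix x m n assume x: "x \<in> {0..b}" and m: "m \<ge> N" and n: "n > m"
      have "dist (U m x) (U n x) = norm (U n x - U m x)" by (simp add: dist_norm norm_minus_commute)
      also have "\<dots> \<le> (\<Sum>i. c (i + m))" using tail[OF x] n by simp
      also have "\<dots> \<le> norm (\<Sum>i. c (i + m))" by simp
      also have "\<dots> < e" using N[OF m] .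
      finally show "dist (U m x) (U n x) < e" .
    qed
  qed
  then have "uniformly_convergent_on {0..b} U" by (rule Cauchy_uniformly_convergent)
  then show ?thesis by (simp add: uniformly_convergent_uniform_limit_iff)
qed

definition usol :: "real \<Rightarrow> 'a" where
  "usol t = lim (\<lambda>n. U n t)"

lemma usol_cont: "continuous_on I usol"
proof (rule cont_I)
  fix b :: real assume b: "b > 0" "{0..b} \<subseteq> I"
  show "continuous_on {0..b} usol" unfolding usol_def
    by (rule uniform_limit_theorem[OF _ U_unif[OF b]])
       (auto intro!: always_eventually continuous_on_subset[OF U_cont b(2)])
qed

lemma usol_fix:
  assumes t: "t \<in> I"
  shows "usol t = Gam usol t"
proof -
  obtain b where b: "b > 0" "t \<le> b" "{0..b} \<subseteq> I" using LOC[OF t] by blast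
  have tb: "t \<in> {0..b}" using b I_nonneg[OF t] by auto
  have ul: "uniform_limit {0..b} U usol sequentially"
    using U_unif[OF b(1) b(3)] unfolding usol_def[abs_def] .
  obtain LS where LS: "LS > 0" and hS: "\<forall>u v. continuous_on I u \<longrightarrow> continuous_on I v \<longrightarrow>
     (\<forall>t\<in>{0..b}. norm (S u t - S v t) \<le> LS * integral {0..t} (\<lambda>s. norm (u s - v s)))"
    using hist[OF b(1) b(3)] by blast
  define K where "K = (LB + \<alpha> + LS * b) / mA"
  have K0: "K \<ge> 0" unfolding K_def using LB0 alpha LS b mA by simp
  have "(\<lambda>n. Gam (U n) t) \<longlonglongrightarrow> Gam usol t"
  proof (rule tendstoI)
    fix e :: real assume e: "e > 0"
    define e' where "e' = e / (K * b + 1)"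
    have Kb: "K * b + 1 > 0" using K0 b by (simp add: add_nonneg_pos)
    have e'0: "e' > 0" unfolding e'_def using e Kb by simp
    have "\<forall>\<^sub>F n in sequentially. \<forall>s\<in>{0..b}. dist (U n s) (usol s) < e'"
      using ul e'0 unfolding uniform_limit_iff by blast
    then show "\<forall>\<^sub>F n in sequentially. dist (Gam (U n) t) (Gam usol t) < e"
    proof eventually_elim
      case (elim n)
      have sub: "{0..t} \<subseteq> {0..b}" using tb by auto
      have "dist (Gam (U n) t) (Gam usol t) = norm (Gam (U n) t - Gam usol t)" by (simp add: dist_norm)
      also have "\<dots> \<le> K * integral {0..t} (\<lambda>s. norm (U n s - usol s))"
        unfolding K_def by (rule Gam_est[OF b(1) b(3) LS hS U_cont usol_cont tb])
      also have "integral {0..t} (\<lambda>s. norm (U n s - usol s)) \<le> integral {0..t} (\<lambda>s. e')"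
      proof (rule integral_le)
        show "(\<lambda>s. norm (U n s - usol s)) integrable_on {0..t}"
        proof -
          have sI: "{0..t} \<subseteq> I" using sub b(3) by auto
          show ?thesis using continuous_on_subset[OF U_cont sI, of n] continuous_on_subset[OF usol_cont sI]
            by (intro integrable_continuous_real continuous_intros)
        qed
        show "(\<lambda>s. e') integrable_on {0..t}" by (intro integrable_continuous_real continuous_intros)
        fix s assume "s \<in> {0..t}"
        then have "s \<in> {0..b}" using sub by auto
        then show "norm (U n s - usol s) \<le> e'" using elim by (auto simp: dist_norm less_imp_le)
      qed
      then have "K * integral {0..t} (\<lambda>s. norm (U n s - usol s)) \<le> K * integral {0..t} (\<lambda>s. e')"
        using K0 by (rule mult_left_mono)
      also have "integral {0..t} (\<lambda>s. e') = e' * t" using tb by simp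
      also have "K * (e' * t) \<le> K * (e' * b)" using K0 e'0 b tb by (intro mult_left_mono) auto
      also have "K * (e' * b) < e"
      proof -
        have "e' * (K * b + 1) = e" unfolding e'_def using Kb by simp
        then have "K * (e' * b) = e - e'" by (simp add: algebra_simps)
        then show ?thesis using e'0 by simp
      qed
      finally show ?case .
    qed
  qed
  moreover have "(\<lambda>n. Gam (U n) t) \<longlonglongrightarrow> usol t"
  proof -
    have "(\<lambda>n. U n t) \<longlonglongrightarrow> usol t" by (rule tendsto_uniform_limitI[OF ul tb])
    then have "(\<lambda>n. U (Suc n) t) \<longlonglongrightarrow> usol t" by (rule LIMSEQ_Suc)
    then show ?thesis by (simp add: U_Suc)
  qed
  ultimately show ?thesis using LIMSEQ_unique by blast
qed

lemma at_I_nontriv: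
  assumes t: "t \<in> I"
  shows "at t within I \<noteq> bot"
proof -
  obtain b where b: "b > 0" "t \<le> b" "{0..b} \<subseteq> I" and at: "at t within I = at t within {0..b}"
    using LOC[OF t] by blast
  have "t islimpt {0..b}" using b I_nonneg[OF t] by simp
  then show ?thesis unfolding at using trivial_limit_within[of t "{0..b}"] by (simp add: trivial_limit_def)
qed

lemma usol_deriv:
  assumes t: "t \<in> I"
  shows "(usol has_vector_derivative G usol t) (at t within I)"
proof -
  obtain b where b: "b > 0" "t \<le> b" "{0..b} \<subseteq> I" and at: "at t within I = at t within {0..b}"
    using LOC[OF t] by blast
  have tb: "t \<in> {0..b}" using b I_nonneg[OF t] by auto
  have cG: "continuous_on {0..b} (G usol)" using continuous_on_subset[OF G_cont[OF usol_cont] b(3)] .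
  have "((\<lambda>s. u0 + Pint 0 s (G usol)) has_vector_derivative (0 + G usol t)) (at t within {0..b})"
    by (rule has_vector_derivative_add[OF has_vector_derivative_const Pint_deriv[OF cG tb]])
  then have "(Gam usol has_vector_derivative G usol t) (at t within {0..b})"
    unfolding Gam_def[abs_def] by simp
  then have "(usol has_vector_derivative G usol t) (at t within {0..b})"
    by (rule has_vector_derivative_transform[OF tb, rotated]) (use b usol_fix in auto)
  then show ?thesis unfolding at .
qed

lemma usol_tdot: "t \<in> I \<Longrightarrow> tdot I usol t = G usol t"
  unfolding tdot_def by (rule vector_derivative_within[OF at_I_nontriv usol_deriv])

lemma usol_C1: "C1_on I usol"
  unfolding C1_on_def
proof
  show "\<forall>t\<in>I. usol differentiable (at t within I)"
    using usol_deriv by (blast intro: differentiableI_vector)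
  show "continuous_on I (tdot I usol)"
    using G_cont[OF usol_cont] by (rule continuous_on_eq) (simp add: usol_tdot)
qed

lemma main:
  "\<exists>u. C1_on I u
           \<and> (\<forall>t\<in>I. - tdot I u t \<in> normal_cone (Ct f j K (u t) t)
                               (A (tdot I u t) + B (u t) + S u t))
           \<and> u 0 = u0
           \<and> (\<forall>t\<in>I. tdot I u t \<in> K)
           \<and> (\<forall>w. C1_on I w
                \<and> (\<forall>t\<in>I. - tdot I w t \<in> normal_cone (Ct f j K (w t) t)
                                    (A (tdot I w t) + B (w t) + S w t))
                \<and> w 0 = u0 \<longrightarrow> (\<forall>t\<in>I. w t = u t))"
proof (intro exI[of _ usol] conjI ballI allI impI)
  show "C1_on I usol" by (rule usol_C1)
next
  fix t assume t: "t \<in> I"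
  have "VIsol (usol t) ((B (usol t) + S usol t) - f t) (G usol t)" unfolding G_def by (rule Phi)
  from E1[OF this] show "- tdot I usol t \<in> normal_cone (Ct f j K (usol t) t) (A (tdot I usol t) + B (usol t) + S usol t)"
    using usol_tdot[OF t] by (simp add: add.assoc)
next
  show "usol 0 = u0" using usol_fix[OF I_0] by (simp add: Gam_def)
next
  fix t assume t: "t \<in> I"
  show "tdot I usol t \<in> K" using usol_tdot[OF t] by (simp add: G_def Phi_K)
next
  fix w t
  assume H: "C1_on I w \<and> (\<forall>t\<in>I. - tdot I w t \<in> normal_cone (Ct f j K (w t) t)
                                    (A (tdot I w t) + B (w t) + S w t)) \<and> w 0 = u0"
    and t: "t \<in> I"
  have diff: "\<And>s. s \<in> I \<Longrightarrow> w differentiable (at s within I)" using H unfolding C1_on_def by blast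
  have tw: "tdot I w s = G w s" if s: "s \<in> I" for s
  proof -
    have "- tdot I w s \<in> normal_cone (Ct f j K (w s) s) (A (tdot I w s) + (B (w s) + S w s))"
      using H s by (simp add: add.assoc)
    from E2[OF this] have "VIsol (w s) ((B (w s) + S w s) - f s) (tdot I w s)" .
    from Phi_eq[OF this] show ?thesis unfolding G_def by simp
  qed
  have wc: "continuous_on I w"
    unfolding continuous_on_eq_continuous_within using diff differentiable_imp_continuous_within by blast
  have wfix: "w s = Gam w s" if s: "s \<in> I" for s
  proof -
    have s0: "0 \<le> s" using I_nonneg[OF s] .
    have "w s - w 0 = Pint 0 s (G w)"
    proof (rule Pint_FTC[OF s0])
      fix x assume x: "x \<in> {0..s}"
      then have xI: "x \<in> I" using I_interval[OF s] by auto
      have "(w has_vector_derivative tdot I w x) (at x within I)"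
        using diff[OF xI] unfolding tdot_def vector_derivative_works .
      then have "(w has_vector_derivative tdot I w x) (at x within {0..s})"
        by (rule has_vector_derivative_within_subset) (rule I_interval[OF s])
      then show "(w has_vector_derivative G w x) (at x within {0..s})" using tw[OF xI] by simp
    qed
    then show ?thesis using H by (simp add: Gam_def algebra_simps)
  qed
  show "w t = usol t"
    using fix_unique[OF wc usol_cont wfix usol_fix t] .
qed

end

theorem corollary4p3:
  fixes I :: "real set" and T :: real
    and K :: "'a::{real_inner,complete_space} set"
    and A B :: "'a \<Rightarrow> 'a" and m\<^sub>A L\<^sub>A :: real
    and f :: "real \<Rightarrow> 'a" and u\<^sub>0 :: 'a
    and S :: "(real \<Rightarrow> 'a) \<Rightarrow> (real \<Rightarrow> 'a)"
    and j :: "'a \<Rightarrow> 'a \<Rightarrow> real" and \<alpha>\<^sub>j :: real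
  assumes I: "(T > 0 \<and> I = {0..T}) \<or> I = {0..}"
    and K_ne: "K \<noteq> {}" and K_closed: "closed K" and K_convex: "convex K"
    and K_cone: "cone K"
    and mA: "m\<^sub>A > 0" and LA: "L\<^sub>A > 0"
    and A_mono: "\<And>u v. (A u - A v) \<bullet> (u - v) \<ge> m\<^sub>A * (norm (u - v))\<^sup>2"
    and A_lip: "\<And>u v. norm (A u - A v) \<le> L\<^sub>A * norm (u - v)"
    and f_cont: "continuous_on I f"
    and B_lip: "\<exists>L. L-lipschitz_on UNIV B"
    and S_maps: "\<And>u. continuous_on I u \<Longrightarrow> continuous_on I (S u)"
    and S_hist: "history_dependent I S"
    and j_convex: "\<And>\<eta>. convex_on K (j \<eta>)"
    and j_homog: "\<And>\<eta> c v. c > 0 \<Longrightarrow> v \<in> K \<Longrightarrow> j \<eta> (c *\<^sub>R v) = c * j \<eta> v"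
    and j_lip: "\<And>\<eta>. \<exists>L. L-lipschitz_on K (j \<eta>)"
    and alpha: "\<alpha>\<^sub>j \<ge> 0"
    and j_cross: "\<And>\<eta>1 \<eta>2 v1 v2. v1 \<in> K \<Longrightarrow> v2 \<in> K \<Longrightarrow>
        j \<eta>1 v2 - j \<eta>1 v1 + j \<eta>2 v1 - j \<eta>2 v2 \<le> \<alpha>\<^sub>j * norm (\<eta>1 - \<eta>2) * norm (v1 - v2)"
  shows "\<exists>u. C1_on I u
           \<and> (\<forall>t\<in>I. - tdot I u t \<in> normal_cone (Ct f j K (u t) t)
                               (A (tdot I u t) + B (u t) + S u t))
           \<and> u 0 = u\<^sub>0
           \<and> (\<forall>t\<in>I. tdot I u t \<in> K)
           \<and> (\<forall>w. C1_on I w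
                \<and> (\<forall>t\<in>I. - tdot I w t \<in> normal_cone (Ct f j K (w t) t)
                                    (A (tdot I w t) + B (w t) + S w t))
                \<and> w 0 = u\<^sub>0 \<longrightarrow> (\<forall>t\<in>I. w t = u t))"
proof -
  obtain LB where LB: "LB-lipschitz_on UNIV B" using B_lip by blast
  interpret prob I T K A B "m\<^sub>A" "L\<^sub>A" LB f "u\<^sub>0" S j "\<alpha>\<^sub>j"
    by (rule prob.intro; (rule assms LB)?)
  show ?thesis by (rule main)
qed

end
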